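(* Let $H$ be a real Hilbert space and let $T\in K(H)$ be a non-zero compact operator. Then the following are equivalent: (i) $T$ is $\varepsilon$-smooth for some $\varepsilon\in[0,2)$; (ii) $M_T=\{\pm x_0\}$ for some $x_0\in S_H$; (iii) $T$ is smooth.
   Context: Smoothness notions for $T$ refer to $T$ as an element of the space $L(H)$ of bounded linear operators on $H$ with the operator norm. For a normed space $Z$ and $z\in Z\setminus\{\theta\}$, $J(z)=\{\phi\in S_{Z^*}:\phi(z)=\|z\|\}$; $z$ is smooth if $J(z)$ is a singleton and $\varepsilon$-smooth if $\operatorname{diam}J(z)=\sup_{\phi,\psi\in J(z)}\|\phi-\psi\|\le\varepsilon$. $M_T=\{x\in S_H:\|Tx\|=\|T\|\}$ is the norm attainment set of $T$. *)

theory Defs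
  imports "HOL-Analysis.Analysis"
begin

definition support_functionals :: "'z::real_normed_vector \<Rightarrow> ('z \<Rightarrow>\<^sub>L real) set" where
  "support_functionals z = {\<phi>. norm \<phi> = 1 \<and> blinfun_apply \<phi> z = norm z}"

definition smooth_point :: "'z::real_normed_vector \<Rightarrow> bool" where
  "smooth_point z \<longleftrightarrow> z \<noteq> 0 \<and> (\<exists>\<phi>. support_functionals z = {\<phi>})"

definition eps_smooth_point :: "'z::real_normed_vector \<Rightarrow> real \<Rightarrow> bool" where
  "eps_smooth_point z \<epsilon> \<longleftrightarrow> z \<noteq> 0 \<and>
     (\<forall>\<phi>\<in>support_functionals z. \<forall>\<psi>\<in>support_functionals z. norm (\<phi> - \<psi>) \<le> \<epsilon>)"

definition compact_operator :: "('a::real_normed_vector \<Rightarrow>\<^sub>L 'b::real_normed_vector) \<Rightarrow> bool" where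
  "compact_operator T \<longleftrightarrow> compact (closure (blinfun_apply T ` ball 0 1))"

definition norm_attainment_set :: "('a::real_normed_vector \<Rightarrow>\<^sub>L 'b::real_normed_vector) \<Rightarrow> 'a set" where
  "norm_attainment_set T = {x. norm x = 1 \<and> norm (blinfun_apply T x) = norm T}"

end

theory Submission
  imports Defs
begin


lemma exists_near_sup:
  fixes S :: "'a::real_normed_vector \<Rightarrow>\<^sub>L 'b::real_normed_vector"
  assumes "S \<noteq> 0" "m < norm S"
  shows "\<exists>x. norm x = 1 \<and> m < norm (S x)"
proof (rule ccontr)
  assume H: "\<not> ?thesis"
  hence H': "\<And>x. norm x = 1 \<Longrightarrow> norm (S x) \<le> m" by force
  obtain z where z: "S z \<noteq> 0" using assms(1) by (metis blinfun_eqI zero_blinfun.rep_eq)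
  hence zn: "z \<noteq> 0" by auto
  have "norm (S (z /\<^sub>R norm z)) \<le> m" using H' zn by simp
  moreover have "norm (S (z /\<^sub>R norm z)) = norm (S z) / norm z"
    by (simp add: blinfun.scaleR_right field_simps)
  ultimately have m0: "0 \<le> m" using z zn by (smt (verit) divide_nonneg_nonneg norm_ge_zero)
  have "\<And>x. norm (S x) \<le> m * norm x"
  proof -
    fix x :: 'a
    show "norm (S x) \<le> m * norm x"
    proof (cases "x = 0")
      case True then show ?thesis by simp
    next
      case False
      have "norm (S (x /\<^sub>R norm x)) \<le> m" using H' False by simp
      moreover have "norm (S (x /\<^sub>R norm x)) = norm (S x) / norm x"
        by (simp add: blinfun.scaleR_right field_simps)
      ultimately show ?thesis using False by (simp add: divide_le_eq mult.commute)
    qed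
  qed
  hence "norm S \<le> m" using m0 by (intro norm_blinfun_bound) auto
  thus False using assms(2) by simp
qed

lemma par_lemma:
  fixes a b :: "'a::real_inner"
  assumes "norm a = 1" "norm b = 1" "2 - s \<le> norm (a + b)" "0 \<le> s"
  shows "(norm (a - b))^2 \<le> 4 * s"
proof -
  have aa: "inner a a = 1" "inner b b = 1" using assms(1,2) by (simp_all add: power2_norm_eq_inner[symmetric])
  have e: "(norm (a - b))^2 = 4 - (norm (a + b))^2"
    unfolding power2_norm_eq_inner using aa by (simp add: inner_add_left inner_add_right
        inner_diff_left inner_diff_right inner_commute)
  show ?thesis
  proof (cases "s \<le> 1")
    case True
    have "(2 - s)^2 \<le> (norm (a + b))^2" using assms(3) True by (intro power_mono) auto
    thus ?thesis using e by (simp add: power2_eq_square algebra_simps) (smt (verit) assms(4) mult_nonneg_nonneg)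
  next
    case False then show ?thesis using e by (smt (verit) zero_le_power2)
  qed
qed



lemma seq_lemma:
  fixes T :: "'a::{real_inner, complete_space} \<Rightarrow>\<^sub>L 'a"
  assumes cT: "compact_operator T" and T0: "T \<noteq> 0"
    and xs1: "\<And>n. norm (xs n) = 1"
    and xsT: "\<And>n. norm T - inverse (real (Suc n)) < norm (T (xs n))"
  shows "\<exists>r l. strict_mono r \<and> (xs \<circ> r) \<longlonglongrightarrow> l \<and> l \<in> norm_attainment_set T"
proof -
  define c where "c = norm T"
  have c0: "0 < c" using T0 c_def by simp
  have le: "\<And>x. norm (T x) \<le> c * norm x" unfolding c_def by (rule norm_blinfun)
  have nT: "(\<lambda>n. norm (T (xs n))) \<longlonglongrightarrow> c"
  proof (rule tendsto_sandwich[of "\<lambda>n. c - inverse (real (Suc n))" _ _ "\<lambda>n. c"])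
    show "\<forall>\<^sub>F n in sequentially. c - inverse (real (Suc n)) \<le> norm (T (xs n))"
      using xsT c_def by (simp add: less_imp_le)
    show "\<forall>\<^sub>F n in sequentially. norm (T (xs n)) \<le> c" using le xs1 by (intro always_eventually) (metis mult.right_neutral)
    show "(\<lambda>n. c - inverse (real (Suc n))) \<longlonglongrightarrow> c"
      using tendsto_diff[OF tendsto_const LIMSEQ_inverse_real_of_nat, of c] by simp
  qed simp
  define K where "K = closure (blinfun_apply T ` ball 0 1)"
  have K: "compact K" using cT unfolding K_def compact_operator_def by simp
  define f where "f n = T ((1/2) *\<^sub>R xs n)" for n
  have "\<forall>n. f n \<in> K" unfolding f_def K_def using xs1
    by (intro allI closure_subset[THEN subsetD] imageI) simp
  then obtain l0 r where r: "strict_mono r" and l0: "(f \<circ> r) \<longlonglongrightarrow> l0"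
    using K unfolding compact_def by blast
  define y where "y = xs \<circ> r"
  have y1: "\<And>n. norm (y n) = 1" using xs1 y_def by simp
  have "(\<lambda>n. 2 *\<^sub>R (f \<circ> r) n) \<longlonglongrightarrow> 2 *\<^sub>R l0" by (intro tendsto_intros l0)
  moreover have "(\<lambda>n. 2 *\<^sub>R (f \<circ> r) n) = (\<lambda>n. T (y n))"
    by (auto simp: f_def y_def blinfun.scaleR_right)
  ultimately have "(\<lambda>n. T (y n)) \<longlonglongrightarrow> 2 *\<^sub>R l0" by simp
  hence CTy: "Cauchy (\<lambda>n. T (y n))" by (rule LIMSEQ_imp_Cauchy)
  have nTy: "(\<lambda>n. norm (T (y n))) \<longlonglongrightarrow> c"
    using LIMSEQ_subseq_LIMSEQ[OF nT r] by (simp add: y_def o_def)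
  have "Cauchy y"
  proof (rule CauchyI)
    fix e :: real assume e: "0 < e"
    define d where "d = e^2 * c / 13"
    have d: "0 < d" using e c0 unfolding d_def by (intro divide_pos_pos mult_pos_pos) auto
    obtain M1 where M1: "\<forall>m\<ge>M1. \<forall>n\<ge>M1. norm (T (y m) - T (y n)) < d"
      using CTy d unfolding Cauchy_iff by blast
    obtain M2 where M2: "\<forall>n\<ge>M2. norm (norm (T (y n)) - c) < d"
      using nTy d unfolding LIMSEQ_iff by blast
    show "\<exists>M. \<forall>m\<ge>M. \<forall>n\<ge>M. norm (y m - y n) < e"
    proof (intro exI allI impI)
      fix m n assume m: "max M1 M2 \<le> m" and n: "max M1 M2 \<le> n"
      have a1: "norm (T (y m) - T (y n)) < d" using M1 m n by simp
      have a2: "c - d < norm (T (y m))" using M2 m by fastforce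
      have "norm (T (y m) + T (y m)) \<le> norm (T (y m) + T (y n)) + norm (T (y m) - T (y n))"
        using norm_triangle_ineq[of "T (y m) + T (y n)" "T (y m) - T (y n)"] by simp
      hence "2 * norm (T (y m)) \<le> norm (T (y m + y n)) + norm (T (y m) - T (y n))"
        by (simp add: blinfun.add_right flip: scaleR_2)
      also have "\<dots> \<le> c * norm (y m + y n) + norm (T (y m) - T (y n))" using le by simp
      finally have "2 * c - 3 * d < c * norm (y m + y n)" using a1 a2 by linarith
      hence "2 - 3 * d / c \<le> norm (y m + y n)" using c0
        by (simp add: field_simps)
      hence "(norm (y m - y n))^2 \<le> 4 * (3 * d / c)"
        using par_lemma[OF y1 y1, of "3 * d / c" m n] d c0 by simp
      also have "\<dots> < e^2" using c0 e unfolding d_def by (simp add: field_simps)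
      finally show "norm (y m - y n) < e"
        using e by (simp add: power_less_imp_less_base)
    qed
  qed
  then obtain l where l: "y \<longlonglongrightarrow> l" using Cauchy_convergent convergent_def by blast
  have "(\<lambda>n. norm (y n)) \<longlonglongrightarrow> norm l" by (intro tendsto_intros l)
  hence l1: "norm l = 1" using y1 by (simp add: LIMSEQ_const_iff)
  have "(\<lambda>n. norm (T (y n))) \<longlonglongrightarrow> norm (T l)"
    by (intro tendsto_intros blinfun.tendsto l)
  hence "norm (T l) = c" using nTy LIMSEQ_unique by blast
  thus ?thesis using r l l1 y_def c_def unfolding norm_attainment_set_def by blast
qed



lemma attain:
  fixes T :: "'a::{real_inner, complete_space} \<Rightarrow>\<^sub>L 'a"
  assumes cT: "compact_operator T" and T0: "T \<noteq> 0"
  shows "\<exists>x. x \<in> norm_attainment_set T"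
proof -
  have "\<forall>n. \<exists>x. norm x = 1 \<and> norm T - inverse (real (Suc n)) < norm (T x)"
    using exists_near_sup[OF T0] by simp
  then obtain xs where "\<And>n. norm (xs n) = 1 \<and> norm T - inverse (real (Suc n)) < norm (T (xs n))"
    by metis
  thus ?thesis using seq_lemma[OF cT T0, of xs] by blast
qed

lemma M_inner:
  fixes T :: "'a::real_inner \<Rightarrow>\<^sub>L 'a"
  assumes x: "x \<in> norm_attainment_set T" and y: "y \<in> norm_attainment_set T"
  shows "inner (T x) (T y) = (norm T)^2 * inner x y"
proof -
  define c where "c = norm T"
  define q where "q z = c^2 * inner z z - inner (T z) (T z)" for z
  have q0: "0 \<le> q z" for z
  proof -
    have "norm (T z) \<le> c * norm z" unfolding c_def by (rule norm_blinfun)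
    hence "(norm (T z))^2 \<le> (c * norm z)^2" by (intro power_mono) auto
    thus ?thesis unfolding q_def by (simp add: power2_norm_eq_inner power_mult_distrib)
  qed
  have qx: "q x = 0" "q y = 0" using x y unfolding q_def norm_attainment_set_def c_def
    by (simp_all flip: power2_norm_eq_inner)
  have sum: "q (x + y) + q (x - y) = 2 * q x + 2 * q y"
    unfolding q_def by (simp add: blinfun.add_right blinfun.diff_right inner_add_left inner_add_right
        inner_diff_left inner_diff_right algebra_simps)
  have "q (x + y) = 0" "q (x - y) = 0" using sum qx q0[of "x+y"] q0[of "x-y"] by linarith+
  moreover have "q (x + y) - q (x - y) = 4 * (c^2 * inner x y - inner (T x) (T y))"
    unfolding q_def by (simp add: blinfun.add_right blinfun.diff_right inner_add_left inner_add_right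
        inner_diff_left inner_diff_right inner_commute algebra_simps)
  ultimately show ?thesis unfolding c_def by simp
qed

definition supf :: "('a::real_inner \<Rightarrow>\<^sub>L 'a) \<Rightarrow> 'a \<Rightarrow> ('a \<Rightarrow>\<^sub>L 'a) \<Rightarrow>\<^sub>L real" where
  "supf T x = Blinfun (\<lambda>A::'a \<Rightarrow>\<^sub>L 'a. inner (blinfun_apply A x) ((1 / norm T) *\<^sub>R T x))"

lemma supf_apply: "blinfun_apply (supf T x) A = inner (A x) (T x) / norm T"
proof -
  have "bounded_linear (\<lambda>A::'a \<Rightarrow>\<^sub>L 'a. inner (blinfun_apply A x) ((1 / norm T) *\<^sub>R T x))"
    by (intro bounded_linear_inner_left_comp blinfun.bounded_linear_left)
  thus ?thesis unfolding supf_def by (simp add: bounded_linear_Blinfun_apply)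
qed

lemma supf_in:
  fixes T :: "'a::real_inner \<Rightarrow>\<^sub>L 'a"
  assumes T0: "T \<noteq> 0" and x: "x \<in> norm_attainment_set T"
  shows "supf T x \<in> support_functionals T"
proof -
  have x1: "norm x = 1" and xT: "norm (T x) = norm T" using x unfolding norm_attainment_set_def by auto
  have c0: "0 < norm T" using T0 by simp
  have ap: "supf T x T = norm T"
    using c0 xT by (simp add: supf_apply power2_eq_square flip: power2_norm_eq_inner)
  have le: "norm (supf T x) \<le> 1"
  proof (rule norm_blinfun_bound)
    fix A :: "'a \<Rightarrow>\<^sub>L 'a"
    have "\<bar>inner (A x) (T x)\<bar> \<le> norm (A x) * norm (T x)" by (rule Cauchy_Schwarz_ineq2)
    also have "\<dots> \<le> norm A * norm T" using x1 xT norm_blinfun[of A x] by (simp add: mult_right_mono)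
    finally show "norm (supf T x A) \<le> 1 * norm A"
      using c0 by (simp add: supf_apply divide_le_eq)
  qed simp
  have "norm T \<le> norm (supf T x) * norm T" using norm_blinfun[of "supf T x" T] ap by simp
  hence "1 \<le> norm (supf T x)" using c0 by simp
  thus ?thesis using le ap unfolding support_functionals_def by simp
qed



lemma M_neg: "x \<in> norm_attainment_set T \<Longrightarrow> -x \<in> norm_attainment_set T"
  unfolding norm_attainment_set_def by (simp add: blinfun.minus_right)

lemma i_to_ii:
  fixes T :: "'a::{real_inner, complete_space} \<Rightarrow>\<^sub>L 'a"
  assumes cT: "compact_operator T" and T0: "T \<noteq> 0"
    and eps: "eps_smooth_point T \<epsilon>" "\<epsilon> < 2"
  shows "\<exists>x0. norm x0 = 1 \<and> norm_attainment_set T = {x0, -x0}"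
proof -
  define c where "c = norm T"
  have c0: "0 < c" using T0 c_def by simp
  obtain x where x: "x \<in> norm_attainment_set T" using attain[OF cT T0] by blast
  have x1: "norm x = 1" and xT: "norm (T x) = c" using x c_def unfolding norm_attainment_set_def by auto
  have xx: "inner x x = 1" using x1 by (simp flip: power2_norm_eq_inner)
  have "y = x \<or> y = -x" if y: "y \<in> norm_attainment_set T" for y
  proof (rule ccontr)
    assume ne: "\<not> (y = x \<or> y = -x)"
    have y1: "norm y = 1" using y unfolding norm_attainment_set_def by auto
    have yy: "inner y y = 1" using y1 by (simp flip: power2_norm_eq_inner)
    define k where "k = inner x y"
    define z where "z = y - k *\<^sub>R x"
    have z0: "z \<noteq> 0"
    proof
      assume "z = 0"
      hence yk: "y = k *\<^sub>R x" unfolding z_def by simp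
      hence "\<bar>k\<bar> = 1" using y1 x1 by simp
      hence "k = 1 \<or> k = -1" by linarith
      thus False using ne yk by auto
    qed
    have Mxy: "inner (T x) (T y) = c^2 * inner x y" using M_inner[OF x y] c_def by simp
    have Mxx: "inner (T x) (T x) = c^2 * inner x x" using M_inner[OF x x] c_def by simp
    have Myy: "inner (T y) (T y) = c^2 * inner y y" using M_inner[OF y y] c_def by simp
    have Tz: "inner (T z) (T z) = c^2 * inner z z"
      unfolding z_def using Mxy Mxx Myy
      by (simp add: blinfun.diff_right blinfun.scaleR_right inner_diff_left inner_diff_right
          inner_commute algebra_simps)
    have nTz: "norm (T z) = c * norm z"
      using Tz c0 by (simp add: norm_eq_sqrt_inner real_sqrt_mult)
    define u where "u = z /\<^sub>R norm z"
    have u1: "norm u = 1" using z0 u_def by simp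
    have uT: "norm (T u) = c" using z0 nTz u_def by (simp add: blinfun.scaleR_right)
    have u: "u \<in> norm_attainment_set T" using u1 uT c_def unfolding norm_attainment_set_def by simp
    have uu: "inner u u = 1" using u1 by (simp flip: power2_norm_eq_inner)
    have xu: "inner x u = 0"
      unfolding u_def z_def k_def using xx by (simp add: inner_diff_right)
    have TxTu: "inner (T x) (T u) = 0" using M_inner[OF x u] xu by simp
    have TuTu: "inner (T u) (T u) = c^2" using uT by (simp flip: power2_norm_eq_inner)
    have TxTx: "inner (T x) (T x) = c^2" using xT by (simp flip: power2_norm_eq_inner)
    define f where "f w = inner w x *\<^sub>R ((1/c) *\<^sub>R T x) - inner w u *\<^sub>R ((1/c) *\<^sub>R T u)" for w
    have bl: "bounded_linear f" unfolding f_def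
      by (intro bounded_linear_sub bounded_linear_scaleR_left bounded_linear_inner_left
          bounded_linear_compose[OF bounded_linear_scaleR_left bounded_linear_inner_left])
    define A where "A = Blinfun f"
    have Aap: "blinfun_apply A w = f w" for w unfolding A_def using bl by (simp add: bounded_linear_Blinfun_apply)
    have "norm A \<le> 1"
    proof (rule norm_blinfun_bound)
      fix w :: 'a
      have e1: "inner (f w) (f w) = (inner w x)^2 + (inner w u)^2"
        unfolding f_def using TxTu TuTu TxTx c0
        by (simp add: inner_diff_left inner_diff_right inner_commute power2_eq_square field_simps)
      have "0 \<le> inner (w - inner w x *\<^sub>R x - inner w u *\<^sub>R u) (w - inner w x *\<^sub>R x - inner w u *\<^sub>R u)"
        by simp
      also have "\<dots> = inner w w - (inner w x)^2 - (inner w u)^2"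
        using xx uu xu by (simp add: inner_diff_left inner_diff_right inner_commute power2_eq_square algebra_simps)
      finally have "inner (f w) (f w) \<le> inner w w" using e1 by simp
      hence "norm (f w) \<le> norm w" by (simp add: norm_eq_sqrt_inner)
      thus "norm (A w) \<le> 1 * norm w" using Aap by simp
    qed simp
    have s1: "supf T x A = 1"
      using TxTu TxTx xx xu c0 by (simp add: supf_apply Aap f_def inner_diff_left c_def[symmetric]
          power2_eq_square inner_commute)
    have s2: "supf T u A = -1"
      using TxTu TuTu uu xu c0 by (simp add: supf_apply Aap f_def inner_diff_left c_def[symmetric]
          power2_eq_square inner_commute)
    have "2 = (supf T x - supf T u) A" using s1 s2 by (simp add: minus_blinfun.rep_eq)
    also have "\<dots> \<le> norm (supf T x - supf T u) * norm A" using norm_blinfun by (metis abs_le_D1 real_norm_def)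
    also have "\<dots> \<le> norm (supf T x - supf T u)" using \<open>norm A \<le> 1\<close>
      by (simp add: mult_left_le)
    also have "\<dots> \<le> \<epsilon>" using eps(1) supf_in[OF T0 x] supf_in[OF T0 u]
      unfolding eps_smooth_point_def by blast
    finally show False using eps(2) by simp
  qed
  hence "norm_attainment_set T = {x, -x}" using x M_neg[OF x] by blast
  thus ?thesis using x1 by blast
qed



lemma near_lemma:
  fixes T A :: "'a::{real_inner, complete_space} \<Rightarrow>\<^sub>L 'a"
  assumes cT: "compact_operator T" and T0: "T \<noteq> 0"
    and M: "norm_attainment_set T = {x0, -x0}" and eta: "0 < \<eta>"
  shows "\<exists>\<delta>>0. \<forall>x. norm x = 1 \<and> norm T - \<delta> < norm (T x) \<longrightarrow>
            inner (A x) (T x) < inner (A x0) (T x0) + \<eta>"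
proof (rule ccontr)
  define g where "g x = inner (A x) (T x)" for x
  assume "\<not> ?thesis"
  hence "\<forall>n. \<exists>x. norm x = 1 \<and> norm T - inverse (real (Suc n)) < norm (T x) \<and> g x0 + \<eta> \<le> g x"
    unfolding g_def by (metis not_less of_nat_0_less_iff positive_imp_inverse_positive zero_less_Suc)
  then obtain xs where xs: "\<And>n. norm (xs n) = 1 \<and> norm T - inverse (real (Suc n)) < norm (T (xs n))
      \<and> g x0 + \<eta> \<le> g (xs n)" by metis
  obtain r l where r: "strict_mono r" and l: "(xs \<circ> r) \<longlonglongrightarrow> l" and lM: "l \<in> norm_attainment_set T"
    using seq_lemma[OF cT T0, of xs] xs by blast
  have gl: "g l = g x0" using lM M unfolding g_def by (auto simp: blinfun.minus_right)
  have "(\<lambda>n. g ((xs \<circ> r) n)) \<longlonglongrightarrow> g l" unfolding g_def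
    by (intro tendsto_intros blinfun.tendsto l)
  moreover have "\<exists>N. \<forall>n\<ge>N. g x0 + \<eta> \<le> g ((xs \<circ> r) n)" using xs by auto
  ultimately have "g x0 + \<eta> \<le> g l" by (rule LIMSEQ_le_const)
  thus False using gl eta by simp
qed

lemma le_lemma:
  fixes T :: "'a::{real_inner, complete_space} \<Rightarrow>\<^sub>L 'a"
  assumes cT: "compact_operator T" and T0: "T \<noteq> 0"
    and M: "norm_attainment_set T = {x0, -x0}"
    and phi: "\<phi> \<in> support_functionals T"
  shows "\<phi> A \<le> supf T x0 A"
proof (rule ccontr)
  assume nle: "\<not> ?thesis"
  define c where "c = norm T"
  have c0: "0 < c" using T0 c_def by simp
  define p where "p = supf T x0 A"
  define \<gamma> where "\<gamma> = \<phi> A - p"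
  have g0: "0 < \<gamma>" using nle p_def \<gamma>_def by simp
  have pe: "inner (A x0) (T x0) = c * p" using c0 by (simp add: p_def supf_apply c_def)
  define \<eta> where "\<eta> = c * \<gamma> / 4"
  have eta: "0 < \<eta>" using c0 g0 unfolding \<eta>_def by simp
  obtain \<delta> where d: "0 < \<delta>" and dH: "\<And>x. norm x = 1 \<Longrightarrow> c - \<delta> < norm (T x) \<Longrightarrow>
            inner (A x) (T x) < c * p + \<eta>"
    using near_lemma[OF cT T0 M eta, of A] pe c_def by auto
  define a where "a = norm A"
  define t where "t = min (c / (2 * (\<bar>p\<bar> + \<gamma> + 1))) (min (\<delta> / (2 * (\<bar>p\<bar> + a + 1)))
       (c * \<gamma> / (2 * (a^2 + 1))))"
  have a0: "0 \<le> a" using a_def by simp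
  have "0 < c / (2 * (\<bar>p\<bar> + \<gamma> + 1))" using c0 g0 by (intro divide_pos_pos) auto
  moreover have "0 < \<delta> / (2 * (\<bar>p\<bar> + a + 1))" using d a0 by (intro divide_pos_pos) auto
  moreover have "0 < c * \<gamma> / (2 * (a^2 + 1))" using c0 g0
    by (intro divide_pos_pos mult_pos_pos) (auto simp: add_nonneg_pos)
  ultimately have t0: "0 < t" unfolding t_def by simp
  have t1: "t * (\<bar>p\<bar> + \<gamma>) < c"
  proof -
    have "t \<le> c / (2 * (\<bar>p\<bar> + \<gamma> + 1))" unfolding t_def by simp
    hence "t * (2 * (\<bar>p\<bar> + \<gamma> + 1)) \<le> c" using g0 by (simp add: pos_le_divide_eq)
    moreover have "t * (\<bar>p\<bar> + \<gamma>) < t * (2 * (\<bar>p\<bar> + \<gamma> + 1))"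
      using t0 g0 by (intro mult_strict_left_mono) auto
    ultimately show ?thesis by linarith
  qed
  have t2: "t * (\<bar>p\<bar> + a) < \<delta>"
  proof -
    have "t \<le> \<delta> / (2 * (\<bar>p\<bar> + a + 1))" unfolding t_def by simp
    hence "t * (2 * (\<bar>p\<bar> + a + 1)) \<le> \<delta>" using a0 by (simp add: pos_le_divide_eq)
    moreover have "t * (\<bar>p\<bar> + a) < t * (2 * (\<bar>p\<bar> + a + 1))"
      using t0 a0 by (intro mult_strict_left_mono) auto
    ultimately show ?thesis by linarith
  qed
  have t3: "t * a^2 \<le> c * \<gamma> / 2"
  proof -
    have "t \<le> c * \<gamma> / (2 * (a^2 + 1))" unfolding t_def by simp
    moreover have "0 < 2 * (a^2 + 1)" by (simp add: add_nonneg_pos)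
    ultimately have "t * (2 * (a^2 + 1)) \<le> c * \<gamma>" by (simp add: pos_le_divide_eq)
    moreover have "t * (2 * (a^2 + 1)) = 2 * (t * a^2) + 2 * t" by (simp add: algebra_simps)
    ultimately show ?thesis using t0 by linarith
  qed
  define S where "S = T + t *\<^sub>R A"
  have e1: "\<phi> S = c + t * \<phi> A" using phi unfolding S_def support_functionals_def c_def
    by (simp add: blinfun.add_right blinfun.scaleR_right)
  have le1: "\<phi> S \<le> norm S"
  proof -
    have "\<phi> S \<le> norm (\<phi> S)" by simp
    also have "\<dots> \<le> norm \<phi> * norm S" by (rule norm_blinfun)
    finally show ?thesis using phi unfolding support_functionals_def by simp
  qed
  have Sge: "c + t * \<phi> A \<le> norm S" using e1 le1 by simp
  define m where "m = c + t * (p + \<gamma> / 2)"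
  have "t * (p + \<gamma> / 2) < t * (p + \<gamma>)" using t0 g0 by (intro mult_strict_left_mono) auto
  hence "m < norm S" using Sge unfolding m_def \<gamma>_def by simp
  have tp: "t * (- \<bar>p\<bar>) \<le> t * p" using t0 by (intro mult_left_mono) auto
  have mexp: "m = c + t * p + t * \<gamma> / 2" unfolding m_def by (simp add: algebra_simps)
  have t1e: "t * (\<bar>p\<bar> + \<gamma>) = t * \<bar>p\<bar> + t * \<gamma>" by (simp add: algebra_simps)
  have t2e: "t * (\<bar>p\<bar> + a) = t * \<bar>p\<bar> + t * a" by (simp add: algebra_simps)
  have tg: "0 < t * \<gamma>" using t0 g0 by simp
  have m0: "0 < m" using t1 t1e tp mexp tg by simp
  have S0: "S \<noteq> 0" using \<open>m < norm S\<close> m0 by auto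
  obtain x where x1: "norm x = 1" and xS: "m < norm (S x)"
    using exists_near_sup[OF S0 \<open>m < norm S\<close>] by blast
  have Ax: "norm (A x) \<le> a" using norm_blinfun[of A x] x1 a_def by simp
  have Tx: "norm (T x) \<le> c" using norm_blinfun[of T x] x1 c_def by simp
  have Sx: "S x = T x + t *\<^sub>R A x" unfolding S_def by (simp add: plus_blinfun.rep_eq scaleR_blinfun.rep_eq)
  have "norm (S x) \<le> norm (T x) + t * norm (A x)" using Sx t0 norm_triangle_ineq[of "T x" "t *\<^sub>R A x"] by simp
  moreover have "t * norm (A x) \<le> t * a" using Ax t0 by (intro mult_left_mono) auto
  ultimately have "m - t * a < norm (T x)" using xS by linarith
  moreover have "c - \<delta> < m - t * a" using t2 t2e tp mexp tg by simp
  ultimately have "c - \<delta> < norm (T x)" by simp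
  hence inn: "inner (A x) (T x) < c * p + \<eta>" using dH x1 by blast
  have "(norm (S x))^2 = (norm (T x))^2 + 2 * t * inner (A x) (T x) + t^2 * (norm (A x))^2"
    unfolding Sx power2_norm_eq_inner
    by (simp add: inner_add_left inner_add_right inner_commute algebra_simps power2_eq_square)
  also have "\<dots> \<le> c^2 + 2 * t * (c * p + \<eta>) + t^2 * a^2"
  proof -
    have "(norm (T x))^2 \<le> c^2" using Tx by (intro power_mono) auto
    moreover have "2 * t * inner (A x) (T x) \<le> 2 * t * (c * p + \<eta>)" using inn t0 by simp
    moreover have "t^2 * (norm (A x))^2 \<le> t^2 * a^2" using Ax by (intro mult_left_mono power_mono) auto
    ultimately show ?thesis by linarith
  qed
  also have "\<dots> \<le> c^2 + 2 * t * c * p + t * c * \<gamma>"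
  proof -
    have "t^2 * a^2 = t * (t * a^2)" by (simp add: power2_eq_square)
    also have "\<dots> \<le> t * (c * \<gamma> / 2)" using t3 t0 by (intro mult_left_mono) auto
    finally show ?thesis unfolding \<eta>_def by (simp add: algebra_simps)
  qed
  also have "\<dots> \<le> m^2"
  proof -
    have "m^2 = c^2 + 2 * t * c * p + t * c * \<gamma> + (t * (p + \<gamma> / 2))^2"
      unfolding m_def by (simp add: power2_eq_square algebra_simps)
    thus ?thesis using zero_le_power2[of "t * (p + \<gamma> / 2)"] by linarith
  qed
  finally have "(norm (S x))^2 \<le> m^2" .
  moreover have "m^2 < (norm (S x))^2" using xS m0 by (intro power_strict_mono) auto
  ultimately show False by simp
qed

lemma ii_to_iii:
  fixes T :: "'a::{real_inner, complete_space} \<Rightarrow>\<^sub>L 'a"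
  assumes cT: "compact_operator T" and T0: "T \<noteq> 0"
    and M: "norm_attainment_set T = {x0, -x0}"
  shows "smooth_point T"
proof -
  have x0: "x0 \<in> norm_attainment_set T" using M by simp
  have "support_functionals T = {supf T x0}"
  proof
    show "{supf T x0} \<subseteq> support_functionals T" using supf_in[OF T0 x0] by simp
    show "support_functionals T \<subseteq> {supf T x0}"
    proof
      fix \<phi> assume phi: "\<phi> \<in> support_functionals T"
      have "\<phi> = supf T x0"
      proof (rule blinfun_eqI)
        fix A
        have "\<phi> A \<le> supf T x0 A" by (rule le_lemma[OF cT T0 M phi])
        moreover have "\<phi> (-A) \<le> supf T x0 (-A)" by (rule le_lemma[OF cT T0 M phi])
        ultimately show "\<phi> A = supf T x0 A" by (simp add: blinfun.minus_right)
      qed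
      thus "\<phi> \<in> {supf T x0}" by simp
    qed
  qed
  thus ?thesis using T0 unfolding smooth_point_def by blast
qed


lemma iii_to_i:
  fixes T :: "'a::{real_inner, complete_space} \<Rightarrow>\<^sub>L 'a"
  assumes "smooth_point T"
  shows "\<exists>\<epsilon>. 0 \<le> \<epsilon> \<and> \<epsilon> < 2 \<and> eps_smooth_point T \<epsilon>"
proof -
  obtain \<phi> where "T \<noteq> 0" "support_functionals T = {\<phi>}" using assms unfolding smooth_point_def by blast
  hence "eps_smooth_point T 0" unfolding eps_smooth_point_def by simp
  thus ?thesis by force
qed

theorem theorem3p2:
  fixes T :: "'a::{real_inner, complete_space} \<Rightarrow>\<^sub>L 'a"
  assumes "compact_operator T" and "T \<noteq> 0"
  shows "((\<exists>\<epsilon>. 0 \<le> \<epsilon> \<and> \<epsilon> < 2 \<and> eps_smooth_point T \<epsilon>)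
            \<longleftrightarrow> (\<exists>x0. norm x0 = 1 \<and> norm_attainment_set T = {x0, -x0}))
       \<and> ((\<exists>x0. norm x0 = 1 \<and> norm_attainment_set T = {x0, -x0})
            \<longleftrightarrow> smooth_point T)"
proof -
  have A: "(\<exists>\<epsilon>. 0 \<le> \<epsilon> \<and> \<epsilon> < 2 \<and> eps_smooth_point T \<epsilon>)
            \<Longrightarrow> (\<exists>x0. norm x0 = 1 \<and> norm_attainment_set T = {x0, -x0})"
    using i_to_ii[OF assms] by blast
  have B: "(\<exists>x0. norm x0 = 1 \<and> norm_attainment_set T = {x0, -x0}) \<Longrightarrow> smooth_point T"
    using ii_to_iii[OF assms] by blast
  show ?thesis using A B iii_to_i[of T] by blast
qed

end
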